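(* Let $n\ge3$. Every nonempty element of $K^{\infty}_n$ has a unique canonical form (its smallest representative word in length-lexicographic order with $y_1<\cdots<y_n$), and the canonical forms are exactly the words $$y^{a_0}_{i_1}y^{a_1}_{i_1-1}\cdots y^{a_{k_1}}_{i_1-k_1}\;y^{b_0}_{i_2}y^{b_1}_{i_2-1}\cdots y^{b_{k_2}}_{i_2-k_2}\cdots y^{h_0}_{i_p}y^{h_1}_{i_p-1}\cdots y^{h_{k_p}}_{i_p-k_p}$$ with all exponents positive and $i_j-k_j<i_{j+1}$ for $j=1,\dots,p-1$, where in addition, as a special case, a factor $y_n^{h}$ may be immediately followed by a factor $y_{n-2}^{j}$. Equivalently, the canonical forms are the words in which every two consecutive letters $y_ay_b$ satisfy $b\ge a-1$ or $(a,b)=(n,n-2)$.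
   Context: $K^{\infty}_n=\langle y_1,\dots,y_n\mid y_iy_j=y_jy_i\ (j+2\le i\le n-1),\ y_ny_k=y_ky_n\ (1\le k\le n-3)\rangle$. *)

theory Defs
  imports Main
begin

text \<open>Words over the alphabet y_1,...,y_n are lists of naturals in {1..n}.
  Defining relations of K^infty_n: y_i y_j = y_j y_i whenever kcomm n i j.\<close>

definition kcomm :: "nat \<Rightarrow> nat \<Rightarrow> nat \<Rightarrow> bool" where
  "kcomm n i j \<longleftrightarrow> (j + 2 \<le> i \<and> i \<le> n - 1) \<or> (i = n \<and> 1 \<le> j \<and> j \<le> n - 3)"

inductive kstep :: "nat \<Rightarrow> nat list \<Rightarrow> nat list \<Rightarrow> bool" for n where
  "kcomm n i j \<Longrightarrow> kstep n (u @ [i, j] @ v) (u @ [j, i] @ v)"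

definition keq :: "nat \<Rightarrow> nat list \<Rightarrow> nat list \<Rightarrow> bool" where
  "keq n = equivclp (kstep n)"

definition shortlex :: "(nat list \<times> nat list) set" where
  "shortlex = lenlex {(a, b). a < b}"

definition kcanon_of :: "nat \<Rightarrow> nat list \<Rightarrow> nat list \<Rightarrow> bool" where
  "kcanon_of n w v \<longleftrightarrow> keq n v w \<and> (\<forall>v'. keq n v' w \<longrightarrow> v' \<noteq> v \<longrightarrow> (v, v') \<in> shortlex)"

definition kcanonical :: "nat \<Rightarrow> nat list \<Rightarrow> bool" where
  "kcanonical n v \<longleftrightarrow> kcanon_of n v v"

end

theory Submission
  imports Defs
begin

lemma kcomm_lt: "kcomm n i j \<Longrightarrow> j < i"
  unfolding kcomm_def by auto

lemma sl_irrefl: "(x,x) \<notin> shortlex"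
  unfolding shortlex_def by (rule lenlex_irreflexive) auto

lemma sl_trans: "(x,y) \<in> shortlex \<Longrightarrow> (y,z) \<in> shortlex \<Longrightarrow> (x,z) \<in> shortlex"
  unfolding shortlex_def by (erule lenlex_trans) (auto simp: trans_def)

lemma sl_total: "x \<noteq> y \<Longrightarrow> (x,y) \<in> shortlex \<or> (y,x) \<in> shortlex"
proof -
  assume "x \<noteq> y"
  have "total {(a::nat, b). a < b}" by (auto simp: total_on_def)
  hence "total (lenlex {(a::nat, b). a < b})" by (rule total_lenlex)
  thus ?thesis using \<open>x \<noteq> y\<close> unfolding shortlex_def total_on_def by blast
qed

lemma sl_wf: "wf shortlex"
  unfolding shortlex_def by (rule wf_lenlex) (rule wf_less)

lemma sl_swap: "kcomm n i j \<Longrightarrow> (u @ [j,i] @ v, u @ [i,j] @ v) \<in> shortlex"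
proof -
  assume k: "kcomm n i j"
  have "([j,i],[i,j]) \<in> lenlex {(a::nat, b). a < b}"
    using kcomm_lt[OF k] by (simp add: Cons_lenlex_iff)
  hence "([j,i] @ v,[i,j] @ v) \<in> lenlex {(a::nat, b). a < b}"
    by (rule lenlex_append1) simp
  moreover have "irrefl {(a::nat, b). a < b}" by (auto simp: irrefl_def)
  ultimately show ?thesis unfolding shortlex_def by simp
qed

lemma equivclp_inv:
  assumes "\<And>x y. r x y \<Longrightarrow> f x = f y" and "equivclp r x y"
  shows "f x = f y"
  using assms(2) unfolding equivclp_def
proof (induction rule: rtranclp_induct)
  case base then show ?case by simp
next
  case (step y z)
  from step.hyps(2) have "r y z \<or> r z y" by (blast elim: symclpE)
  then show ?case using step.IH assms(1) by metis
qed

definition indep :: "nat \<Rightarrow> nat \<Rightarrow> nat \<Rightarrow> bool" where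
  "indep n a b \<longleftrightarrow> kcomm n a b \<or> kcomm n b a"

definition proj :: "nat \<Rightarrow> nat \<Rightarrow> nat list \<Rightarrow> nat list" where
  "proj a b w = filter (\<lambda>x. x = a \<or> x = b) w"

lemma kstep_proj: "kstep n x y \<Longrightarrow> \<not> indep n a b \<Longrightarrow> proj a b x = proj a b y"
  by (induction rule: kstep.induct) (auto simp: proj_def indep_def dest: kcomm_lt)

lemma kstep_set: "kstep n x y \<Longrightarrow> set x = set y"
  by (induction rule: kstep.induct) auto

lemma keq_proj: "keq n x y \<Longrightarrow> \<not> indep n a b \<Longrightarrow> proj a b x = proj a b y"
  unfolding keq_def by (rule equivclp_inv[where r="kstep n"]) (auto intro: kstep_proj)

lemma keq_set: "keq n x y \<Longrightarrow> set x = set y"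
  unfolding keq_def
  apply (rule equivclp_inv[where r="kstep n" and f=set])
   apply (erule kstep_set)
  apply assumption
  done

definition locred :: "nat \<Rightarrow> nat list \<Rightarrow> bool" where
  "locred n v \<longleftrightarrow> (\<forall>i. Suc i < length v \<longrightarrow> \<not> kcomm n (v!i) (v!Suc i))"

lemma locred_Cons2: "locred n (x#y#ys) \<longleftrightarrow> \<not> kcomm n x y \<and> locred n (y#ys)"
  unfolding locred_def
  by (auto simp: nth_Cons split: nat.splits)

lemma locred_tl: "locred n (x#ys) \<Longrightarrow> locred n ys"
  unfolding locred_def by force

lemma locred_prefix: assumes "locred n (xs @ ys)" shows "locred n xs"
  unfolding locred_def
proof (intro allI impI)
  fix i assume i: "Suc i < length xs"
  hence "Suc i < length (xs @ ys)" by simp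
  with assms have "\<not> kcomm n ((xs@ys)!i) ((xs@ys)!Suc i)" unfolding locred_def by blast
  thus "\<not> kcomm n (xs!i) (xs!Suc i)" using i by (simp add: nth_append)
qed

lemma kcanon_locred:
  assumes "kcanon_of n w m" shows "locred n m"
proof (rule ccontr)
  assume "\<not> locred n m"
  then obtain i where i: "Suc i < length m" "kcomm n (m!i) (m!Suc i)"
    unfolding locred_def by auto
  define u where "u = take i m"
  define v where "v = drop (Suc (Suc i)) m"
  have m: "m = u @ [m!i, m!Suc i] @ v"
    unfolding u_def v_def using i(1)
    by (metis Cons_nth_drop_Suc Suc_lessD append_Cons append_Nil append_take_drop_id)
  define m' where "m' = u @ [m!Suc i, m!i] @ v"
  have ks: "kstep n m m'" unfolding m'_def using i(2) m
    by (metis kstep.intros)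
  have "keq n m' m" unfolding keq_def using ks
    by (meson equivclp_sym r_into_equivclp)
  moreover have "keq n m w" using assms unfolding kcanon_of_def by simp
  ultimately have "keq n m' w" unfolding keq_def by (meson equivclp_trans)
  moreover have "m' \<noteq> m" unfolding m'_def using m kcomm_lt[OF i(2)]
    by (metis append_same_eq list.inject nat_neq_iff same_append_eq)
  ultimately have "(m, m') \<in> shortlex" using assms unfolding kcanon_of_def by auto
  moreover have "(m', m) \<in> shortlex" unfolding m'_def using sl_swap[OF i(2)] m by metis
  ultimately show False using sl_trans sl_irrefl by blast
qed

lemma exists_canon: "\<exists>v. kcanon_of n w v"
proof -
  have "w \<in> {v. keq n v w}" unfolding keq_def by simp
  then obtain v where v: "v \<in> {v. keq n v w}" "\<And>y. (y, v) \<in> shortlex \<Longrightarrow> y \<notin> {v. keq n v w}"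
    using wfE_min[OF sl_wf] by metis
  have "kcanon_of n w v" unfolding kcanon_of_def using v sl_total by blast
  thus ?thesis by blast
qed

lemma unique_canon: "kcanon_of n w v1 \<Longrightarrow> kcanon_of n w v2 \<Longrightarrow> v1 = v2"
  unfolding kcanon_of_def using sl_trans sl_irrefl by blast

lemma chain_false:
  assumes "n \<ge> 3" "a \<le> n"
  shows "xs \<noteq> [] \<Longrightarrow> hd xs > a \<Longrightarrow> (\<forall>c\<in>set xs. indep n a c \<and> c \<noteq> a \<and> c \<in> {1..n})
     \<Longrightarrow> locred n (xs @ [a]) \<Longrightarrow> False"
proof (induction xs)
  case Nil then show ?case by simp
next
  case (Cons x xs)
  note IH = Cons.IH and prems = Cons.prems
  show ?case
  proof (cases xs)
    case Nil
    have h: "a < x" "indep n a x" "\<not> kcomm n x a" "x \<le> n"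
      using Cons.prems Nil by (auto simp: locred_Cons2)
    have "kcomm n x a" using h(1,2) kcomm_lt unfolding indep_def by fastforce
    then show ?thesis using h(3) by simp
  next
    case (Cons y ys)
    show ?thesis
    proof (cases "y > a")
      case True
      have l: "locred n (xs @ [a])" using prems(4) locred_tl by (metis append_Cons)
      show ?thesis
        apply (rule IH)
        using Cons apply simp
        using Cons True apply simp
        using prems(3) apply simp
        using l by simp
    next
      case False
      with Cons prems have "y < a" by auto
      have h: "a < x" "indep n a x" "indep n a y" "\<not> kcomm n x y" "x \<le> n" "1 \<le> y"
        using prems Cons by (auto simp: locred_Cons2)
      have k1: "kcomm n x a" using h(1,2) kcomm_lt unfolding indep_def by fastforce
      have k2: "kcomm n a y" using h(3) \<open>y < a\<close> kcomm_lt unfolding indep_def by fastforce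
      show ?thesis using k1 k2 h(4,5,6) \<open>y < a\<close> h(1) unfolding kcomm_def by linarith
    qed
  qed
qed

lemma head_lemma:
  assumes n: "n \<ge> 3"
    and lr: "locred n (b#v1')"
    and s: "set (b#v1') \<subseteq> {1..n}"
    and p: "\<And>c d. \<not> indep n c d \<Longrightarrow> proj c d (a#v1) = proj c d (b#v1')"
    and ab: "a < b"
  shows False
proof -
  let ?v' = "b#v1'"
  have nia: "\<not> indep n a a" unfolding indep_def kcomm_def by auto
  have "proj a a (a#v1) \<noteq> []" by (simp add: proj_def)
  hence "proj a a ?v' \<noteq> []" using p[OF nia] by simp
  hence "a \<in> set ?v'" unfolding proj_def filter_empty_conv by blast
  then obtain xs zs where xs: "?v' = xs @ a # zs" "a \<notin> set xs"
    by (meson split_list_first)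
  have xsne: "xs \<noteq> []" using xs ab by (cases xs) auto
  have hd: "hd xs = b" using xs xsne by (cases xs) auto
  have ind: "indep n a c" if "c \<in> set xs" for c
  proof (rule ccontr)
    assume ni: "\<not> indep n a c"
    have "filter (\<lambda>x. x = a \<or> x = c) xs \<noteq> []" using that
      by (auto simp: filter_empty_conv)
    moreover have "\<forall>x\<in>set (filter (\<lambda>x. x = a \<or> x = c) xs). x = c" using xs(2) by auto
    ultimately obtain t where "filter (\<lambda>x. x = a \<or> x = c) xs = c # t"
      by (metis list.exhaust list.set_intros(1))
    hence "proj a c ?v' = c # (t @ proj a c (a # zs))" unfolding xs(1) proj_def by simp
    moreover have "proj a c (a#v1) = a # proj a c v1" by (simp add: proj_def)
    moreover have "c \<noteq> a" using that xs(2) by auto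
    ultimately show False using p[OF ni] by simp
  qed
  have "a \<le> n" using s xs by auto
  show False
    apply (rule chain_false[OF n \<open>a \<le> n\<close> xsne])
    using hd ab apply simp
    using ind xs s apply auto[1]
    using lr xs(1) locred_prefix[of n "xs @ [a]" zs] by simp
qed

lemma uniq_locred:
  assumes n: "n \<ge> 3"
  shows "locred n v \<Longrightarrow> locred n v' \<Longrightarrow> set v \<subseteq> {1..n} \<Longrightarrow> set v' \<subseteq> {1..n}
    \<Longrightarrow> (\<And>c d. \<not> indep n c d \<Longrightarrow> proj c d v = proj c d v') \<Longrightarrow> v = v'"
proof (induction v arbitrary: v')
  case Nil
  show ?case
  proof (cases v')
    case (Cons b t)
    have "\<not> indep n b b" unfolding indep_def kcomm_def by auto
    from Nil.prems(5)[OF this] Cons show ?thesis by (simp add: proj_def)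
  qed simp
next
  case (Cons a v1)
  show ?case
  proof (cases v')
    case Nil
    have "\<not> indep n a a" unfolding indep_def kcomm_def by auto
    from Cons.prems(5)[OF this] Nil show ?thesis by (simp add: proj_def)
  next
    case (Cons b v1')
    note vb = this
    consider "a = b" | "a < b" | "b < a" by linarith
    then show ?thesis
    proof cases
      case 1
      have "v1 = v1'"
      proof (rule Cons.IH)
        show "locred n v1" using Cons.prems(1) by (rule locred_tl)
        show "locred n v1'" using Cons.prems(2) vb by (auto dest: locred_tl)
        show "set v1 \<subseteq> {1..n}" using Cons.prems(3) by auto
        show "set v1' \<subseteq> {1..n}" using Cons.prems(4) vb by auto
        fix c d assume "\<not> indep n c d"
        from Cons.prems(5)[OF this] show "proj c d v1 = proj c d v1'"
          using vb 1 by (auto simp: proj_def split: if_splits)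
      qed
      then show ?thesis using 1 vb by simp
    next
      case 2
      have lr: "locred n (b#v1')" using Cons.prems(2) vb by simp
      have ss: "set (b#v1') \<subseteq> {1..n}" using Cons.prems(4) vb by simp
      have pp: "\<And>c d. \<not> indep n c d \<Longrightarrow> proj c d (a#v1) = proj c d (b#v1')"
        using Cons.prems(5) vb by simp
      show ?thesis using head_lemma[OF n lr ss pp 2] by simp
    next
      case 3
      have lr: "locred n (a#v1)" using Cons.prems(1) by simp
      have ss: "set (a#v1) \<subseteq> {1..n}" using Cons.prems(3) by simp
      have pp: "\<And>c d. \<not> indep n c d \<Longrightarrow> proj c d (b#v1') = proj c d (a#v1)"
        using Cons.prems(5) vb by simp
      show ?thesis using head_lemma[OF n lr ss pp 3] by simp
    qed
  qed
qed

lemma cond_iff: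
  assumes "n \<ge> 3" "set v \<subseteq> {1..n}"
  shows "locred n v \<longleftrightarrow> (\<forall>i. Suc i < length v \<longrightarrow>
                  v ! i \<le> v ! Suc i + 1 \<or> (v ! i = n \<and> v ! Suc i = n - 2))"
proof -
  have "(\<not> kcomm n (v!i) (v!Suc i)) \<longleftrightarrow> (v ! i \<le> v ! Suc i + 1 \<or> (v ! i = n \<and> v ! Suc i = n - 2))"
    if "Suc i < length v" for i
  proof -
    have "v!i \<in> {1..n}" "v!Suc i \<in> {1..n}" using that assms(2) nth_mem
      by (metis Suc_lessD subsetD, metis subsetD)
    hence "1 \<le> v!i" "v!i \<le> n" "1 \<le> v!Suc i" "v!Suc i \<le> n" by auto
    thus ?thesis using assms(1) unfolding kcomm_def by linarith
  qed
  thus ?thesis unfolding locred_def by blast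
qed

theorem proposition2:
  fixes n :: nat
  assumes "n \<ge> 3"
  shows "(\<forall>w. w \<noteq> [] \<and> set w \<subseteq> {1..n} \<longrightarrow> (\<exists>!v. kcanon_of n w v))
       \<and> (\<forall>v. v \<noteq> [] \<and> set v \<subseteq> {1..n} \<longrightarrow>
            (kcanonical n v \<longleftrightarrow>
              (\<forall>i. Suc i < length v \<longrightarrow>
                  v ! i \<le> v ! Suc i + 1 \<or> (v ! i = n \<and> v ! Suc i = n - 2))))"
proof (intro conjI allI impI)
  fix w show "\<exists>!v. kcanon_of n w v" using exists_canon unique_canon by metis
next
  fix v :: "nat list" assume v: "v \<noteq> [] \<and> set v \<subseteq> {1..n}"
  have "kcanonical n v \<longleftrightarrow> locred n v"
  proof
    assume "kcanonical n v" thus "locred n v" unfolding kcanonical_def by (rule kcanon_locred)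
  next
    assume lr: "locred n v"
    obtain m where m: "kcanon_of n v m" using exists_canon by blast
    have keqm: "keq n m v" using m unfolding kcanon_of_def by simp
    have "m = v"
    proof (rule uniq_locred[OF assms])
      show "locred n m" using m by (rule kcanon_locred)
      show "locred n v" by (rule lr)
      show "set m \<subseteq> {1..n}" using keq_set[OF keqm] v by simp
      show "set v \<subseteq> {1..n}" using v by simp
      show "\<And>c d. \<not> indep n c d \<Longrightarrow> proj c d m = proj c d v" using keqm keq_proj by blast
    qed
    thus "kcanonical n v" using m unfolding kcanonical_def by simp
  qed
  thus "kcanonical n v \<longleftrightarrow> (\<forall>i. Suc i < length v \<longrightarrow>
                  v ! i \<le> v ! Suc i + 1 \<or> (v ! i = n \<and> v ! Suc i = n - 2))"
    using cond_iff[OF assms, of v] v by blast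
qed

end
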